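(* Let $R>q>1$ and $f\in H(\mathbb{D}_R)$ with $f(z)=\sum_{m=0}^\infty a_mz^m$. Then for $|z|<R/q^2$, \[L_q(f;z)=\sum_{m=2}^\infty a_m\left(q\sum_{i=1}^{m-1}[i]_q+\sum_{i=1}^{m-1}[i]_{q^{-1}}\right)z^{m-1}(1-z).\]
   Context: For an integer $i\ge0$ and $p>0$, $[i]_p=1+p+\dots+p^{i-1}$. $\mathbb{D}_R=\{|z|<R\}$, $H(\mathbb{D}_R)$ the analytic functions on it. For $p>0$, $p\ne1$, $D_pf(z)=\frac{f(pz)-f(z)}{(p-1)z}$ for $z\ne0$ and $D_pf(0)=f'(0)$. For $|z|<R/q^2$, $L_q(f;z)=\frac{(1-z)\,q\,(D_qf(z)-D_{q^{-1}}f(z))}{q-1}$. *)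

theory Defs
  imports "HOL-Complex_Analysis.Complex_Analysis"
begin

definition qint :: "nat \<Rightarrow> real \<Rightarrow> real" where
  "qint i p = (\<Sum>k<i. p ^ k)"

definition Dp :: "real \<Rightarrow> (complex \<Rightarrow> complex) \<Rightarrow> complex \<Rightarrow> complex" where
  "Dp p f z = (if z = 0 then deriv f 0
               else (f (complex_of_real p * z) - f z) / ((complex_of_real p - 1) * z))"

definition Lq :: "real \<Rightarrow> (complex \<Rightarrow> complex) \<Rightarrow> complex \<Rightarrow> complex" where
  "Lq q f z = (1 - z) * complex_of_real q * (Dp q f z - Dp (inverse q) f z)
              / (complex_of_real q - 1)"

end

theory Submission
  imports Defs
begin

lemma qint_mult: "(p - 1) * qint m p = p ^ m - 1"
  unfolding qint_def by (induction m) (auto simp: algebra_simps)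

lemma qint_1[simp]: "qint 1 p = 1" unfolding qint_def by simp

lemma key:
  fixes q :: real assumes "q > 1"
  shows "q * (qint (n+2) q - qint (n+2) (inverse q)) =
     (q - 1) * (q * (\<Sum>i=1..n+1. qint i q) + (\<Sum>i=1..n+1. qint i (inverse q)))"
proof (induction n)
  case 0
  have "q * (1 + q - (1 + inverse q)) = (q-1)*(q+1)" using assms by (simp add: field_simps)
  then show ?case by (simp add: qint_def)
next
  case (Suc n)
  have A: "qint (Suc n + 2) p = qint (n+2) p + p^(n+2)" for p
    unfolding qint_def by simp
  have B: "(q - 1) * qint (n+2) q = q^(n+2) - 1" by (rule qint_mult)
  have C: "(inverse q - 1) * qint (n+2) (inverse q) = inverse q^(n+2) - 1" by (rule qint_mult)
  have C': "(q - 1) * qint (n+2) (inverse q) = q * (1 - inverse q^(n+2))"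
  proof -
    have "(q-1) = - q * (inverse q - 1)" using assms by (simp add: field_simps)
    then have "(q - 1) * qint (n+2) (inverse q) = - q * ((inverse q - 1) * qint (n+2) (inverse q))" by simp
    also have "\<dots> = - q * (inverse q^(n+2) - 1)" using C by simp
    finally show ?thesis by (simp add: algebra_simps)
  qed
  have "q * (qint (Suc n+2) q - qint (Suc n+2) (inverse q))
     = q * (qint (n+2) q - qint (n+2) (inverse q)) + q * (q^(n+2) - inverse q ^(n+2))"
    unfolding A by (simp add: algebra_simps)
  also have "q * (q^(n+2) - inverse q ^(n+2)) = (q-1) * (q * qint (n+2) q + qint (n+2) (inverse q))"
  proof -
    have e: "(q-1)*(q * qint (n+2) q + qint (n+2) (inverse q)) = q*((q-1)*qint (n+2) q) + (q-1)*qint (n+2) (inverse q)"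
      by (simp add: algebra_simps)
    show ?thesis unfolding e B C' by (simp add: algebra_simps)
  qed
  finally show ?case using Suc by (simp add: algebra_simps)
qed

lemma dterm:
  fixes p :: real and z a :: complex
  assumes "p \<noteq> 1" "z \<noteq> 0" "m \<ge> 1"
  shows "(a * (of_real p * z)^m - a * z^m) / ((of_real p - 1) * z) = a * z^(m-1) * of_real (qint m p)"
proof -
  have e: "of_real p ^ m - 1 = (of_real p - 1) * (of_real (qint m p) :: complex)"
    using qint_mult[of p m] by (metis of_real_1 of_real_diff of_real_mult of_real_power)
  have zm: "z^m = z * z^(m-1)" using assms(3) by (metis One_nat_def Suc_pred less_eq_Suc_le power_Suc)
  have "a * (of_real p * z)^m - a * z^m = a * z^m * (of_real p ^ m - 1)"
    by (simp add: power_mult_distrib algebra_simps)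
  also have "\<dots> = (of_real p - 1) * z * (a * z^(m-1) * of_real (qint m p))"
    by (simp add: e zm algebra_simps)
  finally show ?thesis using assms by (simp add: field_simps)
qed

lemma aux: fixes c X S A Z z :: complex
  assumes "c \<noteq> 1" "c*X = (c-1)*S" shows "(1-z)*c*(A*Z*X)/(c-1) = A*S*Z*(1-z)"
proof -
  have "(1-z)*c*(A*Z*X)/(c-1) = (1-z)*A*Z*(c*X)/(c-1)" by (simp add: algebra_simps)
  also have "\<dots> = (1-z)*A*Z*S" using assms by (simp add: assms(2))
  finally show ?thesis by (simp add: algebra_simps)
qed

theorem mainTheorem8:
  fixes R q :: real and f :: "complex \<Rightarrow> complex" and a :: "nat \<Rightarrow> complex" and z :: complex
  assumes "R > q" and "q > 1"
    and "f holomorphic_on ball 0 R"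
    and "\<And>w. w \<in> ball 0 R \<Longrightarrow> (\<lambda>m. a m * w ^ m) sums f w"
    and "norm z < R / q\<^sup>2"
  shows "(\<lambda>n. a (n + 2) * complex_of_real (q * (\<Sum>i=1..n+1. qint i q) + (\<Sum>i=1..n+1. qint i (inverse q)))
              * z ^ (n + 1) * (1 - z)) sums Lq q f z"
proof (cases "z = 0")
  case True
  then show ?thesis by (simp add: Lq_def Dp_def)
next
  case False
  have q0: "q > 0" using assms by simp
  have Rpos: "R > 0" using assms by simp
  have nz: "norm z < R"
  proof -
    have "R / q^2 \<le> R" using assms Rpos by (simp add: field_simps)
    then show ?thesis using assms by simp
  qed
  have nqz: "norm (of_real q * z) < R"
  proof -
    have "norm (of_real q * z) = q * norm z" using q0 by (simp add: norm_mult)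
    also have "\<dots> < q * (R / q^2)" using assms q0 by (intro mult_strict_left_mono) auto
    also have "\<dots> = R / q" using q0 by (simp add: power2_eq_square)
    also have "\<dots> < R" using assms Rpos by (simp add: field_simps)
    finally show ?thesis .
  qed
  have niz: "norm (of_real (inverse q) * z) < R"
  proof -
    have "norm (of_real (inverse q) * z) = norm z / q" using q0 by (simp add: norm_mult norm_of_real divide_inverse mult.commute norm_inverse)
    also have "\<dots> \<le> norm z" using assms by (simp add: divide_le_eq mult_le_cancel_left1)
    finally show ?thesis using nz by simp
  qed
  have s1: "(\<lambda>m. a m * (of_real q * z)^m) sums f (of_real q * z)" using assms(4) nqz by simp
  have s2: "(\<lambda>m. a m * z^m) sums f z" using assms(4) nz by simp
  have s3: "(\<lambda>m. a m * (of_real (inverse q) * z)^m) sums f (of_real (inverse q) * z)" using assms(4) niz by simp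
  have d1: "(\<lambda>m. (a m * (of_real q * z)^m - a m * z^m) / ((of_real q - 1) * z)) sums Dp q f z"
    unfolding Dp_def using False sums_divide[OF sums_diff[OF s1 s2]] by simp
  have d2: "(\<lambda>m. (a m * (of_real (inverse q) * z)^m - a m * z^m) / ((of_real (inverse q) - 1) * z)) sums Dp (inverse q) f z"
    unfolding Dp_def using False sums_divide[OF sums_diff[OF s3 s2]] by simp
  define T where "T m = (1 - z) * of_real q * ((a m * (of_real q * z)^m - a m * z^m) / ((of_real q - 1) * z)
      - (a m * (of_real (inverse q) * z)^m - a m * z^m) / ((of_real (inverse q) - 1) * z)) / (of_real q - 1)" for m
  have sT: "T sums Lq q f z"
    unfolding T_def Lq_def by (intro sums_divide sums_mult sums_diff d1 d2)
  have qi: "q \<noteq> 1" "inverse q \<noteq> 1" using assms by auto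
  have Tm: "T m = (1 - z) * of_real q * (a m * z^(m-1) * of_real (qint m q - qint m (inverse q))) / (of_real q - 1)"
    if "m \<ge> 1" for m
    unfolding T_def using dterm[OF qi(1) False that] dterm[OF qi(2) False that]
    by (simp add: algebra_simps)
  have T0: "T i = 0" if "i < 2" for i
  proof (cases "i = 0")
    case True then show ?thesis by (simp add: T_def)
  next
    case False then have "i = 1" using that by simp
    then show ?thesis using Tm[of 1] by (simp add: qint_def)
  qed
  have "(\<lambda>n. T (n + 2)) sums Lq q f z"
    using sums_zero_iff_shift[of 2 T] T0 sT by simp
  moreover have "T (n + 2) = a (n + 2) * complex_of_real (q * (\<Sum>i=1..n+1. qint i q) + (\<Sum>i=1..n+1. qint i (inverse q)))
              * z ^ (n + 1) * (1 - z)" for n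
  proof -
    have k: "of_real q * of_real (qint (n+2) q - qint (n+2) (inverse q)) =
      (of_real q - 1) * (complex_of_real (q * (\<Sum>i=1..n+1. qint i q) + (\<Sum>i=1..n+1. qint i (inverse q))))"
      using arg_cong[OF key[OF assms(2), of n], of complex_of_real] by simp
    have c1: "complex_of_real q \<noteq> 1" using qi by simp
    have "T (n+2) = (1 - z) * of_real q * (a (n+2) * z^(n+1) * of_real (qint (n+2) q - qint (n+2) (inverse q))) / (of_real q - 1)"
      using Tm[of "n+2"] by simp
    then show ?thesis using aux[OF c1 k] by simp
  qed
  ultimately show ?thesis by simp
qed

end
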